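(* Let $2\le d\leq n+1$ and $0<t<t_{n,d}=\frac{d}{n+1}$. Then every point of $Z_1\cup Z_2$ is GIT$_t$-unstable. In particular, $\big((H_{n,d}\times H_{n,1})\setminus(Z_1\cup Z_2)\big)^{ss}_t=(H_{n,d}\times H_{n,1})^{ss}_t$.
   Context: $H_{n,d}=\mathbb P(H^0(\mathbb P^{n+1},\mathcal O(d)))$, $H_{n,1}$ the space of hyperplanes of $\mathbb P^{n+1}$; $G=\mathrm{SL}(n+2,\mathbb C)$ acts naturally on $H_{n,d}\times H_{n,1}$. For $a,b>0$ let $\mathcal O(a,b)=\pi_1^*\mathcal O_{H_{n,d}}(a)\otimes\pi_2^*\mathcal O_{H_{n,1}}(b)$ with its natural $G$-linearisation; for rational $t=b/a>0$, GIT$_t$-(semi)stability means GIT (semi)stability with respect to $\mathcal O(a,b)$, and $(\cdot)^{ss}_t$ denotes the GIT$_t$-semistable locus. $Z_1$ is the locus of $(p,l)$ with $\mathrm{Supp}\{l=0\}\subseteq\mathrm{Supp}\{p=0\}$; $Z_2$ is the locus of $(p,l)$ such that, with $X=\{p=0\}$, $H=\{l=0\}$, there is a hyperplane $H'\ne H$ with $X\cap H=X\cap H'$. *)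

theory Defs
  imports "HOL-Analysis.Analysis"
begin

text \<open>Variables x_0..x_{n+1} of P^{n+1} are indexed by a finite type 'v with CARD('v) = n+2.
  A point of P^{n+1} is represented by a vector in complex^'v (the zero vector is harmless below).\<close>

definition monoms :: "nat \<Rightarrow> ('v::finite \<Rightarrow> nat) set" where
  "monoms d = {m. sum m UNIV = d}"

definition hom_poly :: "nat \<Rightarrow> (complex^'v::finite \<Rightarrow> complex) \<Rightarrow> bool" where
  "hom_poly d f \<longleftrightarrow> (\<exists>c :: ('v \<Rightarrow> nat) \<Rightarrow> complex.
      f = (\<lambda>x. \<Sum>m\<in>monoms d. c m * (\<Prod>i\<in>UNIV. (x $ i) ^ m i)))"

definition act :: "complex^'v^'v \<Rightarrow> (complex^'v::finite \<Rightarrow> complex) \<Rightarrow> (complex^'v \<Rightarrow> complex)" where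
  "act g f = (\<lambda>x. f (matrix_inv g *v x))"

text \<open>Polynomial functions on the space of pairs (p,l): the algebra generated by constants
  and the linear coordinate functionals (evaluations, which span the dual spaces).\<close>
inductive_set polyfun :: "(((complex^'v::finite \<Rightarrow> complex) \<times> (complex^'v \<Rightarrow> complex)) \<Rightarrow> complex) set"
where
  pf_const: "(\<lambda>_. c) \<in> polyfun"
| pf_ev1: "(\<lambda>(f, l). f x) \<in> polyfun"
| pf_ev2: "(\<lambda>(f, l). l x) \<in> polyfun"
| pf_add: "F \<in> polyfun \<Longrightarrow> G \<in> polyfun \<Longrightarrow> (\<lambda>z. F z + G z) \<in> polyfun"
| pf_mult: "F \<in> polyfun \<Longrightarrow> G \<in> polyfun \<Longrightarrow> (\<lambda>z. F z * G z) \<in> polyfun"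

text \<open>Bihomogeneous of bidegree (A,B) on V_d \<times> V_1: a section of O(A,B) on H_{n,d} \<times> H_{n,1}.\<close>
definition bihom :: "nat \<Rightarrow> nat \<Rightarrow> nat \<Rightarrow>
    (((complex^'v::finite \<Rightarrow> complex) \<times> (complex^'v \<Rightarrow> complex)) \<Rightarrow> complex) \<Rightarrow> bool" where
  "bihom d A B F \<longleftrightarrow> (\<forall>f l (s::complex) (u::complex). hom_poly d f \<longrightarrow> hom_poly 1 l \<longrightarrow>
      F (\<lambda>x. s * f x, \<lambda>x. u * l x) = s ^ A * u ^ B * F (f, l))"

definition sl_invariant :: "nat \<Rightarrow>
    (((complex^'v::finite \<Rightarrow> complex) \<times> (complex^'v \<Rightarrow> complex)) \<Rightarrow> complex) \<Rightarrow> bool" where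
  "sl_invariant d F \<longleftrightarrow> (\<forall>(g::complex^'v^'v) f l. det g = 1 \<longrightarrow> hom_poly d f \<longrightarrow> hom_poly 1 l \<longrightarrow>
      F (act g f, act g l) = F (f, l))"

definition git_semistable_ab :: "nat \<Rightarrow> nat \<Rightarrow> nat \<Rightarrow>
    (complex^'v::finite \<Rightarrow> complex) \<Rightarrow> (complex^'v \<Rightarrow> complex) \<Rightarrow> bool" where
  "git_semistable_ab d a b p l \<longleftrightarrow> (\<exists>k>0. \<exists>F\<in>polyfun.
      bihom d (k * a) (k * b) F \<and> sl_invariant d F \<and> F (p, l) \<noteq> 0)"

definition git_t_semistable :: "nat \<Rightarrow> rat \<Rightarrow>
    (complex^'v::finite \<Rightarrow> complex) \<Rightarrow> (complex^'v \<Rightarrow> complex) \<Rightarrow> bool" where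
  "git_t_semistable d t p l \<longleftrightarrow> (\<exists>a b::nat. 0 < a \<and> 0 < b \<and> t = of_nat b / of_nat a \<and>
      git_semistable_ab d a b p l)"

definition is_pt :: "nat \<Rightarrow> (complex^'v::finite \<Rightarrow> complex) \<Rightarrow> (complex^'v \<Rightarrow> complex) \<Rightarrow> bool" where
  "is_pt d p l \<longleftrightarrow> hom_poly d p \<and> p \<noteq> (\<lambda>_. 0) \<and> hom_poly 1 l \<and> l \<noteq> (\<lambda>_. 0)"

definition Z1 :: "(complex^'v::finite \<Rightarrow> complex) \<Rightarrow> (complex^'v \<Rightarrow> complex) \<Rightarrow> bool" where
  "Z1 p l \<longleftrightarrow> (\<forall>x. l x = 0 \<longrightarrow> p x = 0)"

definition Z2 :: "(complex^'v::finite \<Rightarrow> complex) \<Rightarrow> (complex^'v \<Rightarrow> complex) \<Rightarrow> bool" where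
  "Z2 p l \<longleftrightarrow> (\<exists>l'. hom_poly 1 l' \<and> l' \<noteq> (\<lambda>_. 0) \<and> (\<forall>c. l' \<noteq> (\<lambda>x. c * l x)) \<and>
      {x. p x = 0 \<and> l x = 0} = {x. p x = 0 \<and> l' x = 0})"

end

theory Submission
  imports Defs "HOL-Library.FuncSet" "HOL-Computational_Algebra.Fundamental_Theorem_Algebra"
begin


abbreviation mon :: "('v::finite \<Rightarrow> nat) \<Rightarrow> complex^'v \<Rightarrow> complex" where
  "mon m x \<equiv> (\<Prod>i\<in>UNIV. (x $ i) ^ m i)"

lemma finite_monoms: "finite (monoms d :: ('v::finite \<Rightarrow> nat) set)"
proof -
  have "monoms d \<subseteq> (Pi\<^sub>E (UNIV::'v set) (\<lambda>_. {..d}))"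
    unfolding monoms_def PiE_UNIV_domain
    by (auto intro!: member_le_sum)
  moreover have "finite (Pi\<^sub>E (UNIV::'v set) (\<lambda>_. {..d}))"
    by (rule finite_PiE) auto
  ultimately show ?thesis by (rule finite_subset)
qed

lemma hp_zero: "hom_poly d (\<lambda>x. 0)"
  unfolding hom_poly_def by (rule exI[of _ "\<lambda>_. 0"]) simp

lemma hp_add: "hom_poly d f \<Longrightarrow> hom_poly d g \<Longrightarrow> hom_poly d (\<lambda>x. f x + g x)"
  unfolding hom_poly_def
  apply (elim exE)
  subgoal for c1 c2 by (rule exI[of _ "\<lambda>m. c1 m + c2 m"]) (simp add: sum.distrib distrib_right)
  done

lemma hp_scale: "hom_poly d f \<Longrightarrow> hom_poly d (\<lambda>x. a * f x)"
  unfolding hom_poly_def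
  apply (elim exE)
  subgoal for c by (rule exI[of _ "\<lambda>m. a * c m"]) (simp add: sum_distrib_left mult.assoc)
  done

lemma hp_sum: "(\<And>i. i \<in> I \<Longrightarrow> hom_poly d (f i)) \<Longrightarrow> hom_poly d (\<lambda>x. \<Sum>i\<in>I. f i x)"
proof (induction I rule: infinite_finite_induct)
  case (infinite A) then show ?case by (simp add: hp_zero)
next
  case empty then show ?case by (simp add: hp_zero)
next
  case (insert x F) then show ?case by (simp add: hp_add)
qed

lemma hp_one: "hom_poly 0 (\<lambda>x. 1)"
proof -
  have *: "monoms 0 = {(\<lambda>_. 0) :: 'v::finite \<Rightarrow> nat}" unfolding monoms_def by auto
  show ?thesis unfolding hom_poly_def
    by (intro exI[of _ "\<lambda>_. 1"]) (simp add: *)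
qed

lemma monoms1_char:
  assumes "m \<in> monoms 1" shows "\<exists>k. m = (\<lambda>i::'v::finite. if i = k then 1 else 0)"
proof -
  have s: "sum m UNIV = 1" using assms by (simp add: monoms_def)
  obtain k where k: "m k \<noteq> 0" using s by (metis sum.neutral zero_neq_one)
  have "m k \<le> sum m UNIV" by (rule member_le_sum) auto
  hence mk: "m k = 1" using k s by simp
  have "sum m UNIV = m k + sum m (UNIV - {k})" by (simp add: sum.remove)
  hence "sum m (UNIV - {k}) = 0" using s mk by simp
  hence "\<forall>i\<in>UNIV - {k}. m i = 0" by simp
  hence "m = (\<lambda>i. if i = k then 1 else 0)" using mk by auto
  then show ?thesis by blast
qed

lemma monoms1_eq: "monoms 1 = range (\<lambda>k. (\<lambda>i::'v::finite. if i = k then 1 else 0))"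
  using monoms1_char by (auto simp: monoms_def)

lemma mon_delta: "mon (\<lambda>i. if i = k then 1 else 0) x = x $ k"
proof -
  have "(\<Prod>i\<in>UNIV. (x $ i) ^ (if i = k then 1 else 0)) = (\<Prod>i\<in>UNIV. if i = k then x $ i else 1)"
    by (rule prod.cong) auto
  also have "\<dots> = x $ k" by (simp add: prod.delta)
  finally show ?thesis .
qed

lemma hp_coord: "hom_poly 1 (\<lambda>x::complex^'v::finite. x $ j)"
proof -
  define e where "e = (\<lambda>i. if i = j then 1 else (0::nat))"
  have eM: "e \<in> monoms 1" by (simp add: monoms_def e_def)
  have "(\<Sum>m\<in>monoms 1. (if m = e then 1 else 0) * mon m x) = x $ j" for x :: "complex^'v"
  proof -
    have "(\<Sum>m\<in>monoms 1. (if m = e then 1 else 0) * mon m x) = (\<Sum>m\<in>monoms 1. if m = e then mon m x else 0)"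
      by (rule sum.cong) auto
    also have "\<dots> = mon e x" using eM by (simp add: sum.delta finite_monoms)
    also have "\<dots> = x $ j" unfolding e_def by (rule mon_delta)
    finally show ?thesis .
  qed
  then show ?thesis unfolding hom_poly_def by (intro exI[of _ "\<lambda>m. if m = e then 1 else 0"]) auto
qed

lemma hp_linear:
  assumes "hom_poly 1 l" shows "\<exists>a::complex^'v::finite. \<forall>x. l x = (\<Sum>i\<in>UNIV. a $ i * x $ i)"
proof -
  obtain c where c: "l = (\<lambda>x. \<Sum>m\<in>monoms 1. c m * mon m x)" using assms hom_poly_def by blast
  define E where "E = (\<lambda>k. (\<lambda>i::'v. if i = k then 1 else (0::nat)))"
  have inj: "inj E" unfolding E_def inj_def by (metis zero_neq_one)
  have "l x = (\<Sum>k\<in>UNIV. c (E k) * x $ k)" for x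
    unfolding c monoms1_eq E_def[symmetric]
    by (subst sum.reindex[OF inj]) (simp add: E_def mon_delta)
  then show ?thesis by (intro exI[of _ "\<chi> k. c (E k)"]) simp
qed

lemma mon_add: fixes m1 :: "'v::finite \<Rightarrow> nat" shows "mon (\<lambda>i. m1 i + m2 i) x = mon m1 x * mon m2 x"
  by (simp add: power_add prod.distrib)

lemma hp_mult:
  assumes "hom_poly a f" "hom_poly b g"
  shows "hom_poly (a + b) (\<lambda>x::complex^'v::finite. f x * g x)"
proof -
  obtain c1 where c1: "f = (\<lambda>x. \<Sum>m\<in>monoms a. c1 m * mon m x)" using assms(1) hom_poly_def by blast
  obtain c2 where c2: "g = (\<lambda>x. \<Sum>m\<in>monoms b. c2 m * mon m x)" using assms(2) hom_poly_def by blast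
  define S where "S = (monoms a :: ('v \<Rightarrow> nat) set) \<times> (monoms b :: ('v \<Rightarrow> nat) set)"
  have fS: "finite S" unfolding S_def by (simp add: finite_monoms)
  define C where "C = (\<lambda>m::'v \<Rightarrow> nat. (\<Sum>q\<in>{q \<in> S. (\<lambda>i. fst q i + snd q i) = m}. c1 (fst q) * c2 (snd q)))"
  have img: "(\<lambda>q. (\<lambda>i::'v. fst q i + snd q i)) ` S \<subseteq> monoms (a + b)"
    unfolding S_def monoms_def by (auto simp: sum.distrib)
  have "f x * g x = C' x" if "C' = (\<lambda>x. \<Sum>m\<in>monoms (a+b). C m * mon m x)" for x C'
  proof -
    have "f x * g x = (\<Sum>q\<in>S. c1 (fst q) * c2 (snd q) * mon ((\<lambda>i::'v. fst q i + snd q i)) x)"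
      unfolding c1 c2 S_def sum_product sum.cartesian_product mon_add
      by (rule sum.cong) (auto simp: mult_ac)
    also have "\<dots> = (\<Sum>m\<in>monoms (a+b). \<Sum>q\<in>{q \<in> S. (\<lambda>i::'v. fst q i + snd q i) = m}. c1 (fst q) * c2 (snd q) * mon ((\<lambda>i::'v. fst q i + snd q i)) x)"
      by (rule sum.group[symmetric, OF fS finite_monoms img])
    also have "\<dots> = (\<Sum>m\<in>monoms (a+b). C m * mon m x)"
      unfolding C_def sum_distrib_right by (intro sum.cong refl) auto
    finally show ?thesis using that by simp
  qed
  then show ?thesis unfolding hom_poly_def by (intro exI[of _ C]) auto
qed

lemma hp_prod:
  assumes "finite I" "\<And>i. i \<in> I \<Longrightarrow> hom_poly (e i) (f i)"
  shows "hom_poly (\<Sum>i\<in>I. e i) (\<lambda>x::complex^'v::finite. \<Prod>i\<in>I. f i x)"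
  using assms
proof (induction I rule: finite_induct)
  case empty then show ?case by (simp add: hp_one)
next
  case (insert j F) then show ?case by (simp add: hp_mult)
qed

lemma hp_power: "hom_poly a f \<Longrightarrow> hom_poly (k * a) (\<lambda>x. f x ^ k)"
proof (induction k)
  case 0 then show ?case by (simp add: hp_one)
next
  case (Suc k) then show ?case using hp_mult[of a f "k * a" "\<lambda>x. f x ^ k"] by (simp add: add.commute)
qed

lemma hp_lin_comb: "hom_poly 1 (\<lambda>x::complex^'v::finite. \<Sum>j\<in>UNIV. b j * x $ j)"
  by (intro hp_sum hp_scale hp_coord)

lemma hp_compose:
  assumes "hom_poly d f"
  shows "hom_poly d (\<lambda>x. f ((A::complex^'v::finite^'v) *v x))"
proof -
  obtain c where c: "f = (\<lambda>x. \<Sum>m\<in>monoms d. c m * mon m x)" using assms hom_poly_def by blast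
  have "hom_poly d (\<lambda>x. \<Sum>m\<in>monoms d. c m * mon m (A *v x))"
  proof (rule hp_sum, rule hp_scale)
    fix m :: "'v \<Rightarrow> nat" assume m: "m \<in> monoms d"
    have "hom_poly (\<Sum>i\<in>UNIV. m i * 1) (\<lambda>x. \<Prod>i\<in>UNIV. ((A *v x) $ i) ^ m i)"
      unfolding matrix_vector_mult_def
      by (intro hp_prod hp_power) (simp, simp only: vec_lambda_beta, rule hp_lin_comb)
    then show "hom_poly d (\<lambda>x. mon m (A *v x))" using m by (simp add: monoms_def)
  qed
  then show ?thesis by (simp add: c)
qed

lemma hp_homog: "hom_poly d (f :: complex^'a::finite \<Rightarrow> complex) \<Longrightarrow> f (s *s x) = s ^ d * f x"
proof -
  assume "hom_poly d f"
  then obtain c where c: "f = (\<lambda>x. \<Sum>m\<in>monoms d. c m * mon m x)" using hom_poly_def by blast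
  have "mon m (s *s x) = s ^ d * mon m x" if "m \<in> monoms d" for m :: "'a \<Rightarrow> nat"
  proof -
    have "mon m (s *s x) = (\<Prod>i\<in>UNIV. s ^ m i) * mon m x"
      by (simp add: power_mult_distrib prod.distrib)
    also have "(\<Prod>i\<in>UNIV. s ^ m i) = s ^ d" using that by (simp add: power_sum[symmetric] monoms_def)
    finally show ?thesis .
  qed
  then show ?thesis unfolding c sum_distrib_left by (intro sum.cong) (auto simp: mult_ac)
qed

lemma polyfun_tendsto:
  assumes "F \<in> polyfun"
    and "\<And>x. ((\<lambda>s. f s x) \<longlongrightarrow> f0 x) net" and "\<And>x. ((\<lambda>s. g s x) \<longlongrightarrow> g0 x) net"
  shows "((\<lambda>s. F (f s, g s)) \<longlongrightarrow> F (f0, g0)) net"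
  using assms(1)
proof (induction rule: polyfun.induct)
  case (pf_const c) then show ?case by simp
next
  case (pf_ev1 x) then show ?case using assms(2) by simp
next
  case (pf_ev2 x) then show ?case using assms(3) by simp
next
  case (pf_add F G) then show ?case by (intro tendsto_add)
next
  case (pf_mult F G) then show ?case by (intro tendsto_mult)
qed

lemma matrix_inv_props:
  fixes A :: "'a::field^'n^'n"
  assumes "invertible A"
  shows "A ** matrix_inv A = mat 1" "matrix_inv A ** A = mat 1"
proof -
  have "\<exists>A'. A ** A' = mat 1 \<and> A' ** A = mat 1" using assms invertible_def by blast
  hence "A ** matrix_inv A = mat 1 \<and> matrix_inv A ** A = mat 1"
    unfolding matrix_inv_def by (rule someI_ex)
  then show "A ** matrix_inv A = mat 1" "matrix_inv A ** A = mat 1" by auto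
qed

lemma matrix_inv_eq:
  fixes A B :: "'a::field^'n^'n"
  assumes "A ** B = mat 1" "B ** A = mat 1"
  shows "matrix_inv A = B"
proof -
  have inv: "invertible A" using assms invertible_def by blast
  have "matrix_inv A = matrix_inv A ** (A ** B)" by (simp add: assms)
  also have "\<dots> = (matrix_inv A ** A) ** B" by (simp add: matrix_mul_assoc)
  also have "\<dots> = B" by (simp add: matrix_inv_props[OF inv])
  finally show ?thesis .
qed

lemma matrix_inv_inv:
  fixes A :: "'a::field^'n^'n"
  assumes "invertible A"
  shows "matrix_inv (matrix_inv A) = A" "det (matrix_inv A) * det A = 1"
proof -
  show "matrix_inv (matrix_inv A) = A"
    by (rule matrix_inv_eq) (simp_all add: matrix_inv_props[OF assms])
  have "det (matrix_inv A ** A) = 1" by (simp add: matrix_inv_props[OF assms])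
  then show "det (matrix_inv A) * det A = 1" by (simp add: det_mul)
qed

lemma sum_two:
  fixes f :: "'v::finite \<Rightarrow> complex"
  assumes "k0 \<noteq> k1" "\<And>j. j \<noteq> k0 \<Longrightarrow> j \<noteq> k1 \<Longrightarrow> f j = 0"
  shows "(\<Sum>j\<in>UNIV. f j) = f k0 + f k1"
proof -
  have "(\<Sum>j\<in>UNIV. f j) = (\<Sum>j\<in>{k0,k1}. f j)"
    by (rule sum.mono_neutral_right) (auto simp: assms)
  then show ?thesis using assms(1) by simp
qed

lemma Qmat:
  fixes a a' :: "complex^'v::finite"
  assumes k: "k0 \<noteq> k1" and minor: "a$k0 * a'$k1 - a$k1 * a'$k0 \<noteq> 0"
  shows "\<exists>P::complex^'v^'v. invertible P \<and> (\<forall>v. (\<Sum>j\<in>UNIV. a$j * (P *v v)$j) = v$k0)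
            \<and> (\<forall>v. (\<Sum>j\<in>UNIV. a'$j * (P *v v)$j) = v$k1)"
proof -
  define Q :: "complex^'v^'v" where "Q = (\<chi> i j. if i = k0 then a$j else if i = k1 then a'$j else (if i = j then 1 else 0))"
  have Qv: "(Q *v y)$i = (if i = k0 then (\<Sum>j\<in>UNIV. a$j * y$j) else if i = k1 then (\<Sum>j\<in>UNIV. a'$j * y$j) else y$i)" for y i
  proof -
    have d: "(\<Sum>j\<in>UNIV. (if i = j then 1 else 0) * y$j) = y$i"
    proof -
      have "(\<Sum>j\<in>UNIV. (if i = j then 1 else 0) * y$j) = (\<Sum>j\<in>UNIV. if i = j then y$j else 0)"
        by (rule sum.cong) auto
      then show ?thesis by simp
    qed
    show ?thesis unfolding Q_def matrix_vector_mult_def using d by auto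
  qed
  have inj: "inj ((*v) Q)"
  proof (rule injI)
    fix y z assume "Q *v y = Q *v z"
    hence w0: "Q *v (y - z) = 0" by (simp add: matrix_vector_mult_diff_distrib)
    define w where "w = y - z"
    have wi: "w$i = 0" if "i \<noteq> k0" "i \<noteq> k1" for i
      using arg_cong[OF w0, of "\<lambda>u. u$i"] that by (simp add: Qv w_def)
    have e1: "a$k0 * w$k0 + a$k1 * w$k1 = 0"
      using arg_cong[OF w0, of "\<lambda>u. u$k0"] by (simp add: Qv w_def[symmetric] sum_two[OF k] wi)
    have e2: "a'$k0 * w$k0 + a'$k1 * w$k1 = 0"
      using arg_cong[OF w0, of "\<lambda>u. u$k1"] k by (simp add: Qv w_def[symmetric] sum_two[OF k] wi)
    have "(a$k0 * a'$k1 - a$k1 * a'$k0) * w$k0 = a'$k1 * (a$k0 * w$k0 + a$k1 * w$k1) - a$k1 * (a'$k0 * w$k0 + a'$k1 * w$k1)"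
      by (simp add: algebra_simps)
    hence "w$k0 = 0" using e1 e2 minor by simp
    moreover have "(a$k0 * a'$k1 - a$k1 * a'$k0) * w$k1 = a$k0 * (a'$k0 * w$k0 + a'$k1 * w$k1) - a'$k0 * (a$k0 * w$k0 + a$k1 * w$k1)"
      by (simp add: algebra_simps)
    hence "w$k1 = 0" using e1 e2 minor by simp
    ultimately have "w = 0" using wi by (metis vec_eq_iff zero_index)
    then show "y = z" by (simp add: w_def)
  qed
  have invQ: "invertible Q"
    using inj matrix_left_invertible_injective invertible_left_inverse by blast
  define P where "P = matrix_inv Q"
  have QP: "Q *v (P *v v) = v" for v
    by (simp add: P_def matrix_vector_mul_assoc matrix_inv_props[OF invQ])
  have invP: "invertible P" unfolding P_def invertible_def
    using matrix_inv_props[OF invQ] by blast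
  show ?thesis
  proof (intro exI[of _ P] conjI allI invP)
    fix v
    show "(\<Sum>j\<in>UNIV. a$j * (P *v v)$j) = v$k0" using arg_cong[OF QP[of v], of "\<lambda>u. u$k0"] by (simp add: Qv)
    show "(\<Sum>j\<in>UNIV. a'$j * (P *v v)$j) = v$k1" using arg_cong[OF QP[of v], of "\<lambda>u. u$k1"] k by (simp add: Qv)
  qed
qed

lemma fta_lemma:
  fixes p :: "complex^'v::finite \<Rightarrow> complex"
  assumes hp: "hom_poly d p" and d: "d \<ge> 1" and k: "k0 \<noteq> k1"
    and hyp: "\<And>v. v$k0 = 0 \<Longrightarrow> p v = 0 \<Longrightarrow> v$k1 = 0"
  shows "\<exists>C. \<forall>v. v$k0 = 0 \<longrightarrow> p v = C * (v$k1)^d"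
proof -
  obtain c where c: "p = (\<lambda>x. \<Sum>m\<in>monoms d. c m * mon m x)" using hp hom_poly_def by blast
  define ms :: "'v \<Rightarrow> nat" where "ms = (\<lambda>i. if i = k1 then d else 0)"
  have msM: "ms \<in> monoms d" by (simp add: monoms_def ms_def)
  have mk1: "(m k1 = d) \<longleftrightarrow> m = ms" if "m \<in> monoms d" for m
  proof
    assume a: "m k1 = d"
    have "sum m UNIV = m k1 + sum m (UNIV - {k1})" by (simp add: sum.remove)
    hence "sum m (UNIV - {k1}) = 0" using that a by (simp add: monoms_def)
    hence "\<forall>i\<in>UNIV - {k1}. m i = 0" by simp
    then show "m = ms" using a by (auto simp: ms_def)
  qed (simp add: ms_def)
  have mle: "m k1 \<le> d" if "m \<in> monoms d" for m
  proof -
    have "m k1 \<le> sum m UNIV" by (rule member_le_sum) auto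
    then show ?thesis using that by (simp add: monoms_def)
  qed
  define C where "C = c ms"
  define e :: "complex^'v" where "e = (\<chi> i. if i = k1 then 1 else 0)"
  have mone: "mon m e = (if m = ms then 1 else 0)" if "m \<in> monoms d" for m
  proof (cases "m = ms")
    case True
    have "mon m e = 1" unfolding True e_def ms_def
      by (rule prod.neutral) auto
    then show ?thesis using True by simp
  next
    case False
    have "\<exists>i. i \<noteq> k1 \<and> m i \<noteq> 0"
    proof (rule ccontr)
      assume "\<not> (\<exists>i. i \<noteq> k1 \<and> m i \<noteq> 0)"
      hence z: "\<forall>i\<in>UNIV - {k1}. m i = 0" by blast
      have "sum m UNIV = m k1 + sum m (UNIV - {k1})" by (simp add: sum.remove)
      hence "m k1 = d" using z that by (simp add: monoms_def)
      then show False using mk1[OF that] False by simp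
    qed
    then obtain i where "i \<noteq> k1" "m i \<noteq> 0" by blast
    hence "(e$i)^(m i) = 0" by (simp add: e_def)
    hence "mon m e = 0" by (intro prod_zero) auto
    then show ?thesis using False by simp
  qed
  have pe: "p e = C"
  proof -
    have "p e = (\<Sum>m\<in>monoms d. if m = ms then c m else 0)"
      unfolding c by (intro sum.cong refl) (simp add: mone)
    then show ?thesis using msM by (simp add: finite_monoms C_def)
  qed
  have C0: "C \<noteq> 0"
  proof
    assume "C = 0"
    hence "e$k1 = 0" using hyp[of e] pe k by (simp add: e_def)
    then show False by (simp add: e_def)
  qed
  show ?thesis
  proof (intro exI[of _ C] allI impI)
    fix v :: "complex^'v" assume v0: "v$k0 = 0"
    define vt where "vt = (\<lambda>\<tau>. (\<chi> i. if i = k1 then \<tau> else v$i) :: complex^'v)"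
    define R where "R m = (\<Prod>i\<in>UNIV - {k1}. (v$i)^(m i))" for m :: "'v \<Rightarrow> nat"
    have monvt: "mon m (vt \<tau>) = \<tau>^(m k1) * R m" for m \<tau>
    proof -
      have "mon m (vt \<tau>) = (vt \<tau> $ k1)^(m k1) * (\<Prod>i\<in>UNIV - {k1}. (vt \<tau> $ i)^(m i))"
        by (simp add: prod.remove)
      also have "(\<Prod>i\<in>UNIV - {k1}. (vt \<tau> $ i)^(m i)) = R m"
        unfolding R_def by (intro prod.cong refl) (simp add: vt_def)
      finally show ?thesis by (simp add: vt_def)
    qed
    define Qp where "Qp = (\<Sum>m\<in>monoms d. monom (c m * R m) (m k1))"
    have polyQ: "poly Qp \<tau> = p (vt \<tau>)" for \<tau>
      unfolding Qp_def c poly_sum poly_monom monvt by (intro sum.cong refl) (simp add: mult_ac)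
    have coeffQ: "coeff Qp j = (\<Sum>m\<in>monoms d. if m k1 = j then c m * R m else 0)" for j
      unfolding Qp_def coeff_sum coeff_monom by simp
    have cd: "coeff Qp d = C"
    proof -
      have "coeff Qp d = (\<Sum>m\<in>monoms d. if m = ms then c m * R m else 0)"
        unfolding coeffQ by (intro sum.cong refl) (simp add: mk1)
      also have "\<dots> = c ms * R ms" using msM by (simp add: finite_monoms)
      also have "R ms = 1" unfolding R_def ms_def by (intro prod.neutral) auto
      finally show ?thesis by (simp add: C_def)
    qed
    have cgt: "coeff Qp j = 0" if "j > d" for j
      unfolding coeffQ using mle that by (intro sum.neutral) (auto dest: mle)
    have degQ: "degree Qp = d"
      using le_degree[of Qp d] degree_le[of d Qp] cd C0 cgt by force
    have lcQ: "lead_coeff Qp = C" using degQ cd by simp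
    have roots: "{z. poly Qp z = 0} \<subseteq> {0}"
    proof
      fix z assume "z \<in> {z. poly Qp z = 0}"
      hence "p (vt z) = 0" by (simp add: polyQ)
      moreover have "vt z $ k0 = 0" using k v0 by (simp add: vt_def)
      ultimately have "vt z $ k1 = 0" using hyp by blast
      then show "z \<in> {0}" by (simp add: vt_def)
    qed
    have dec: "smult C (\<Prod>z|poly Qp z = 0. [:-z, 1:] ^ order z Qp) = Qp"
      using complex_poly_decompose[of Qp] lcQ by simp
    have "{z. poly Qp z = 0} = {} \<or> {z. poly Qp z = 0} = {0}" using roots by blast
    then have "poly Qp \<tau> = C * \<tau>^d" for \<tau>
    proof
      assume E: "{z. poly Qp z = 0} = {}"
      hence "Qp = [:C:]" using dec by simp
      hence "degree Qp = 0" by simp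
      then show ?thesis using degQ d by simp
    next
      assume E: "{z. poly Qp z = 0} = {0}"
      hence Qe: "Qp = smult C ([:0, 1:] ^ order 0 Qp)" using dec by simp
      hence "degree Qp = order 0 Qp" using C0 by (metis degree_linear_power degree_smult_eq)
      hence "Qp = smult C ([:0, 1:] ^ d)" using Qe degQ by simp
      then show ?thesis by simp
    qed
    moreover have "vt (v$k1) = v" by (simp add: vt_def vec_eq_iff)
    ultimately show "p v = C * (v$k1)^d" using polyQ by metis
  qed
qed

lemma diag_mult:
  fixes w :: "'v::finite \<Rightarrow> complex"
  shows "(\<chi> i j. if i = j then w i else 0) *v y = (\<chi> i. w i * y$i)"
proof -
  have "(\<Sum>j\<in>UNIV. (if i = j then w i else 0) * y$j) = w i * y$i" for i
  proof -
    have "(\<Sum>j\<in>UNIV. (if i = j then w i else 0) * y$j) = (\<Sum>j\<in>UNIV. if i = j then w i * y$j else 0)"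
      by (rule sum.cong) auto
    then show ?thesis by simp
  qed
  then show ?thesis unfolding matrix_vector_mult_def by (simp add: vec_eq_iff)
qed

lemma split_k0:
  fixes p :: "complex^'v::finite \<Rightarrow> complex"
  assumes c: "p = (\<lambda>x. \<Sum>m\<in>monoms d. c m * mon m x)"
  shows "p z = p (\<chi> i. if i = k0 then 0 else z$i) + (\<Sum>m\<in>monoms d \<inter> {m. m k0 \<noteq> 0}. c m * mon m z)"
proof -
  define z0 :: "complex^'v" where "z0 = (\<chi> i. if i = k0 then 0 else z$i)"
  define K where "K = {m :: 'v \<Rightarrow> nat. m k0 \<noteq> 0}"
  have fM: "finite (monoms d :: ('v \<Rightarrow> nat) set)" by (rule finite_monoms)
  have "p z = (\<Sum>m\<in>monoms d \<inter> K. c m * mon m z) + (\<Sum>m\<in>monoms d - K. c m * mon m z)"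
    unfolding c by (rule sum.Int_Diff[OF fM])
  moreover have "p z0 = (\<Sum>m\<in>monoms d \<inter> K. c m * mon m z0) + (\<Sum>m\<in>monoms d - K. c m * mon m z0)"
    unfolding c by (rule sum.Int_Diff[OF fM])
  moreover have "(\<Sum>m\<in>monoms d \<inter> K. c m * mon m z0) = 0"
  proof (intro sum.neutral ballI)
    fix m assume "m \<in> monoms d \<inter> K"
    hence "m k0 \<noteq> 0" by (simp add: K_def)
    hence "(z0$k0)^(m k0) = 0" by (simp add: z0_def)
    hence "mon m z0 = 0" by (intro prod_zero) auto
    then show "c m * mon m z0 = 0" by simp
  qed
  moreover have "(\<Sum>m\<in>monoms d - K. c m * mon m z0) = (\<Sum>m\<in>monoms d - K. c m * mon m z)"
  proof (intro sum.cong refl)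
    fix m assume "m \<in> monoms d - K"
    hence "m k0 = 0" by (simp add: K_def)
    hence "mon m z0 = mon m z" by (intro prod.cong refl) (auto simp: z0_def)
    then show "c m * mon m z0 = c m * mon m z" by simp
  qed
  ultimately show ?thesis by (simp add: z0_def K_def)
qed

lemma mon_E:
  fixes m :: "'v::finite \<Rightarrow> nat"
  assumes k: "k0 \<noteq> k1"
  shows "mon m (\<chi> i. (if i = k0 then s^(n+1) else if i = k1 then s else 1) * y$i)
       = s^((n+1) * m k0 + m k1) * mon m y"
proof -
  have "mon m (\<chi> i. (if i = k0 then s^(n+1) else if i = k1 then s else 1) * y$i)
      = (\<Prod>i\<in>UNIV. (if i = k0 then s^(n+1) else if i = k1 then s else 1)^(m i)) * mon m y"
    by (simp add: power_mult_distrib prod.distrib)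
  also have "(\<Prod>i\<in>UNIV. (if i = k0 then s^(n+1) else if i = k1 then s else 1)^(m i))
     = (\<Prod>i\<in>UNIV. (if i = k0 then (s^(n+1))^(m k0) else 1) * (if i = k1 then s^(m k1) else 1))"
    by (intro prod.cong refl) (use k in auto)
  also have "\<dots> = s^((n+1) * m k0 + m k1)"
    by (simp add: prod.distrib power_add power_mult power_mult_distrib)
  finally show ?thesis .
qed



lemma oneps:
  fixes p l :: "complex^'v::finite \<Rightarrow> complex" and P :: "complex^'v^'v"
  assumes card: "CARD('v) = n + 2" and n: "n \<ge> 1" and dn: "d \<le> n + 1"
    and hp: "hom_poly d p" and hl: "hom_poly 1 l"
    and P: "invertible P" and k: "k0 \<noteq> k1"
    and lP: "\<And>v. l (P *v v) = v$k0"
    and pP: "\<And>v. v$k0 = 0 \<Longrightarrow> p (P *v v) = C * (v$k1)^d"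
    and F: "F \<in> polyfun" and bh: "bihom d A B F" and B: "B > 0" and inv: "sl_invariant d F"
  shows "F (p, l) = 0"
proof -
  define p' where "p' v = p (P *v v)" for v
  have hp': "hom_poly d p'" unfolding p'_def by (rule hp_compose[OF hp])
  obtain c where c: "p' = (\<lambda>x. \<Sum>m\<in>monoms d. c m * mon m x)" using hp' hom_poly_def by blast
  define w where "w s i = (if i = k0 then s^n else if i = k1 then 1 else 1/s)" for s :: complex and i :: 'v
  define D where "D s = ((\<chi> i j. if i = j then w s i else 0) :: complex^'v^'v)" for s
  have Dv: "D s *v y = (\<chi> i. w s i * y$i)" for s y unfolding D_def by (rule diag_mult)
  have detD: "det (D s) = 1" if s: "s \<noteq> 0" for s
  proof -
    have "det (D s) = (\<Prod>i\<in>UNIV. w s i)" unfolding D_def by (subst det_diagonal) auto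
    also have "\<dots> = w s k0 * w s k1 * (\<Prod>i\<in>UNIV - {k0} - {k1}. w s i)"
    proof -
      have "(\<Prod>i\<in>UNIV. w s i) = w s k0 * (\<Prod>i\<in>UNIV - {k0}. w s i)"
        by (rule prod.remove) auto
      also have "(\<Prod>i\<in>UNIV - {k0}. w s i) = w s k1 * (\<Prod>i\<in>UNIV - {k0} - {k1}. w s i)"
        by (rule prod.remove) (use k in auto)
      finally show ?thesis by (simp add: mult.assoc)
    qed
    also have "(\<Prod>i\<in>UNIV - {k0} - {k1}. w s i) = (\<Prod>i\<in>UNIV - {k0} - {k1}. 1/s)"
      by (intro prod.cong refl) (auto simp: w_def)
    also have "\<dots> = (1/s)^n"
    proof -
      have "card (UNIV - {k0} - {k1} :: 'v set) = n" using card k by (simp add: card_Diff_singleton)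
      then show ?thesis by simp
    qed
    moreover have "w s k0 = s^n" "w s k1 = 1" using k by (simp_all add: w_def)
    moreover have "s^n * (1/s)^n = 1" using s by (simp add: power_one_over)
    ultimately show ?thesis by simp
  qed
  define Pi where "Pi = matrix_inv P"
  have PPi: "P ** Pi = mat 1" "Pi ** P = mat 1" unfolding Pi_def using matrix_inv_props[OF P] by auto
  define h where "h s = P ** D s ** Pi" for s
  have deth: "det (h s) = 1" if "s \<noteq> 0" for s
  proof -
    have "det (h s) = det P * det (D s) * det Pi" unfolding h_def det_mul by simp
    also have "\<dots> = (det P * det Pi) * det (D s)" by (simp only: mult_ac)
    also have "det P * det Pi = 1"
    proof -
      have "det (P ** Pi) = 1" by (simp add: PPi(1))
      then show ?thesis by (simp only: det_mul)
    qed
    finally show ?thesis using detD[OF that] by simp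
  qed
  define g where "g s = matrix_inv (h s)" for s
  have invh: "invertible (h s)" if "s \<noteq> 0" for s by (simp add: invertible_det_nz deth[OF that])
  have detg: "det (g s) = 1" if "s \<noteq> 0" for s
    using matrix_inv_inv(2)[OF invh[OF that]] deth[OF that] by (simp add: g_def)
  have actg: "act (g s) f = (\<lambda>x. f (P *v (D s *v (Pi *v x))))" if "s \<noteq> 0" for s f
  proof -
    have "act (g s) f = (\<lambda>x. f (h s *v x))"
      unfolding act_def g_def by (simp only: matrix_inv_inv(1)[OF invh[OF that]])
    then show ?thesis by (simp add: h_def matrix_vector_mul_assoc[symmetric])
  qed
  have lim_l: "((\<lambda>s. u * l (P *v (D s *v (Pi *v x)))) \<longlongrightarrow> 0) (at 0)" for u x
  proof -
    have "l (P *v (D s *v (Pi *v x))) = s^n * (Pi *v x)$k0" for s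
      by (simp add: lP Dv w_def)
    moreover have "((\<lambda>s. u * (s^n * (Pi *v x)$k0)) \<longlongrightarrow> u * (0^n * (Pi *v x)$k0)) (at (0::complex))"
      by (intro tendsto_intros)
    moreover have "(0::complex)^n = 0" using n by simp
    ultimately show ?thesis by simp
  qed
  have lim_p: "\<exists>L. ((\<lambda>s. p (P *v (D s *v (Pi *v x)))) \<longlongrightarrow> L) (at 0)" for x
  proof -
    define y where "y = Pi *v x"
    define MK where "MK = monoms d \<inter> {m :: 'v \<Rightarrow> nat. m k0 \<noteq> 0}"
    define e where "e m = (n+1) * m k0 + m k1" for m :: "'v \<Rightarrow> nat"
    define G where "G s = C * (y$k1)^d + (\<Sum>m\<in>MK. c m * (s^(e m - d) * mon m y))" for s :: complex
    have eq: "p (P *v (D s *v (Pi *v x))) = G s" if s: "s \<noteq> 0" for s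
    proof -
      define E where "E = (\<chi> i. (if i = k0 then s^(n+1) else if i = k1 then s else 1) * y$i)"
      have DE: "D s *v y = (1/s) *s E"
      proof -
        have "w s i * y$i = 1/s * ((if i = k0 then s^(n+1) else if i = k1 then s else 1) * y$i)" for i
          using s k by (cases "i = k0"; cases "i = k1") (simp_all add: w_def field_simps)
        then show ?thesis by (simp add: Dv E_def vec_eq_iff)
      qed
      have "p (P *v (D s *v (Pi *v x))) = p' ((1/s) *s E)" unfolding p'_def y_def[symmetric] DE by (rule refl)
      also have "\<dots> = (1/s)^d * p' E" by (rule hp_homog[OF hp'])
      also have "p' E = p' (\<chi> i. if i = k0 then 0 else E$i) + (\<Sum>m\<in>MK. c m * mon m E)"
        unfolding MK_def by (rule split_k0[OF c])
      also have "p' (\<chi> i. if i = k0 then 0 else E$i) = C * (s * y$k1)^d"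
        unfolding p'_def by (subst pP) (use k in \<open>auto simp: E_def\<close>)
      also have "(\<Sum>m\<in>MK. c m * mon m E) = (\<Sum>m\<in>MK. c m * (s^(e m) * mon m y))"
        unfolding E_def e_def by (intro sum.cong refl) (simp only: mon_E[OF k])
      also have "(1/s)^d * (C * (s * y$k1)^d + (\<Sum>m\<in>MK. c m * (s^(e m) * mon m y))) = G s"
      proof -
        have ge: "e m \<ge> d" if "m \<in> MK" for m
        proof -
          have "m k0 \<ge> 1" using that by (simp add: MK_def)
          hence "(n+1) * m k0 \<ge> (n + 1) * 1" by (rule mult_le_mono2)
          then show ?thesis using dn by (simp add: e_def)
        qed
        have tm: "(1/s)^d * (c m * (s^(e m) * mon m y)) = c m * (s^(e m - d) * mon m y)" if "m \<in> MK" for m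
        proof -
          have "s^(e m) = s^(e m - d) * s^d" using ge[OF that] by (simp add: power_add[symmetric])
          then show ?thesis using s by (simp add: field_simps)
        qed
        have t1: "(1/s)^d * (C * (s * y$k1)^d) = C * (y$k1)^d"
          using s by (simp add: power_mult_distrib power_one_over)
        have t2: "(1/s)^d * (\<Sum>m\<in>MK. c m * (s^(e m) * mon m y)) = (\<Sum>m\<in>MK. c m * (s^(e m - d) * mon m y))"
          unfolding sum_distrib_left by (rule sum.cong) (simp_all add: tm)
        show ?thesis by (simp only: distrib_left t1 t2 G_def)
      qed
      finally show ?thesis .
    qed
    have "(G \<longlongrightarrow> G 0) (at 0)" unfolding G_def by (intro tendsto_intros)
    moreover have "\<forall>\<^sub>F s in at 0. G s = p (P *v (D s *v (Pi *v x)))"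
      using eq by (auto simp: eventually_at_filter)
    ultimately show ?thesis by (metis tendsto_cong)
  qed
  hence "\<forall>x. \<exists>L. ((\<lambda>s. p (P *v (D s *v (Pi *v x)))) \<longlongrightarrow> L) (at 0)" by blast
  hence "\<exists>plim. \<forall>x. ((\<lambda>s. p (P *v (D s *v (Pi *v x)))) \<longlongrightarrow> plim x) (at 0)" by (rule choice)
  then obtain plim where plim: "\<And>x. ((\<lambda>s. p (P *v (D s *v (Pi *v x)))) \<longlongrightarrow> plim x) (at 0)"
    by blast
  have key: "u ^ B * F (p, l) = F (plim, \<lambda>x. 0)" for u :: complex
  proof -
    have hlu: "hom_poly 1 (\<lambda>x. u * l x)" by (rule hp_scale[OF hl])
    have "F (p, \<lambda>x. u * l x) = u ^ B * F (p, l)"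
    proof -
      have "F (\<lambda>x. 1 * p x, \<lambda>x. u * l x) = 1 ^ A * u ^ B * F (p, l)"
        using bh hp hl unfolding bihom_def by blast
      then show ?thesis by simp
    qed
    moreover have "F (act (g s) p, act (g s) (\<lambda>x. u * l x)) = F (p, \<lambda>x. u * l x)" if "s \<noteq> 0" for s
      using inv detg[OF that] hp hlu unfolding sl_invariant_def by blast
    ultimately have ev: "\<forall>\<^sub>F s in at 0. F ((\<lambda>x. p (P *v (D s *v (Pi *v x)))), (\<lambda>x. u * l (P *v (D s *v (Pi *v x))))) = u ^ B * F (p, l)"
      by (auto simp: eventually_at_filter actg)
    have "((\<lambda>s. F ((\<lambda>x. p (P *v (D s *v (Pi *v x)))), (\<lambda>x. u * l (P *v (D s *v (Pi *v x)))))) \<longlongrightarrow> F (plim, \<lambda>x. 0)) (at 0)"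
      by (rule polyfun_tendsto[OF F plim lim_l])
    hence "((\<lambda>s. u ^ B * F (p, l)) \<longlongrightarrow> F (plim, \<lambda>x. 0)) (at (0::complex))"
      using ev by (rule Lim_transform_eventually)
    then show ?thesis using tendsto_const tendsto_unique[OF at_neq_bot] by blast
  qed
  have "F (p, l) = 2 ^ B * F (p, l)" using key[of 1] key[of 2] by simp
  hence "(2 ^ B - 1) * F (p, l) = 0" by (simp add: algebra_simps)
  moreover have "(2::complex) ^ B \<noteq> 1"
  proof
    assume "(2::complex) ^ B = 1"
    hence "norm ((2::complex) ^ B) = 1" by simp
    hence "(2::real) ^ B = 1" by (simp add: norm_power)
    moreover have "1 < (2::real)^B" using B by (intro one_less_power) auto
    ultimately show False by simp
  qed
  ultimately show ?thesis by simp
qed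



lemma coords:
  fixes p l :: "complex^'v::finite \<Rightarrow> complex"
  assumes card2: "CARD('v) \<ge> 2" and hp: "hom_poly d p" and d: "d \<ge> 1" and hl: "hom_poly 1 l"
    and l0: "l \<noteq> (\<lambda>_. 0)" and Z: "Z1 p l \<or> Z2 p l"
  shows "\<exists>(P::complex^'v^'v) k0 k1 C. invertible P \<and> k0 \<noteq> k1 \<and> (\<forall>v. l (P *v v) = v$k0)
           \<and> (\<forall>v. v$k0 = 0 \<longrightarrow> p (P *v v) = C * (v$k1)^d)"
proof -
  obtain a :: "complex^'v" where la: "\<And>x. l x = (\<Sum>i\<in>UNIV. a$i * x$i)" using hp_linear[OF hl] by blast
  have "a \<noteq> 0"
  proof
    assume "a = 0" hence "l = (\<lambda>_. 0)" by (simp add: la[abs_def])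
    then show False using l0 by simp
  qed
  then obtain k0 where ak0: "a$k0 \<noteq> 0" by (metis vec_eq_iff zero_index)
  from Z show ?thesis
  proof
    assume Z1: "Z1 p l"
    obtain k1 where k1: "k1 \<noteq> k0"
    proof -
      have "UNIV \<noteq> {k0}"
      proof
        assume "UNIV = {k0}" hence "card (UNIV :: 'v set) = card {k0}" by (rule arg_cong)
        hence "CARD('v) = 1" by simp
        then show False using card2 by simp
      qed
      then show ?thesis using that by blast
    qed
    define a' :: "complex^'v" where "a' = axis k1 1"
    have minor: "a$k0 * a'$k1 - a$k1 * a'$k0 \<noteq> 0" using ak0 k1 by (simp add: a'_def axis_def)
    obtain P where P: "invertible P" "\<forall>v. (\<Sum>j\<in>UNIV. a$j * (P *v v)$j) = v$k0"
      using Qmat[OF k1[symmetric] minor] by blast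
    have lP: "l (P *v v) = v$k0" for v using P(2) by (simp add: la)
    have "p (P *v v) = 0 * (v$k1)^d" if "v$k0 = 0" for v
      using Z1 lP that unfolding Z1_def by simp
    then show ?thesis using P(1) k1 lP
      by (intro exI[of _ P] exI[of _ k0] exI[of _ k1] exI[of _ 0] conjI allI impI) auto
  next
    assume "Z2 p l"
    then obtain l' where hl': "hom_poly 1 l'" and nm: "\<forall>c. l' \<noteq> (\<lambda>x. c * l x)"
      and Zeq: "{x. p x = 0 \<and> l x = 0} = {x. p x = 0 \<and> l' x = 0}" unfolding Z2_def by blast
    obtain a' :: "complex^'v" where la': "\<And>x. l' x = (\<Sum>i\<in>UNIV. a'$i * x$i)" using hp_linear[OF hl'] by blast
    define \<mu> where "\<mu> = a'$k0 / a$k0"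
    define b where "b = a' - \<mu> *s a"
    have "b \<noteq> 0"
    proof
      assume "b = 0"
      hence "a' = \<mu> *s a" by (simp add: b_def)
      hence "l' = (\<lambda>x. \<mu> * l x)" by (auto simp: la la' sum_distrib_left mult.assoc)
      then show False using nm by blast
    qed
    then obtain k1 where bk1: "b$k1 \<noteq> 0" by (metis vec_eq_iff zero_index)
    have "b$k0 = 0" using ak0 by (simp add: b_def \<mu>_def)
    hence k: "k0 \<noteq> k1" using bk1 by auto
    have "a$k0 * a'$k1 - a$k1 * a'$k0 = a$k0 * b$k1" using ak0 by (simp add: b_def \<mu>_def field_simps)
    hence minor: "a$k0 * a'$k1 - a$k1 * a'$k0 \<noteq> 0" using ak0 bk1 by simp
    obtain P where P: "invertible P" "\<forall>v. (\<Sum>j\<in>UNIV. a$j * (P *v v)$j) = v$k0"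
        "\<forall>v. (\<Sum>j\<in>UNIV. a'$j * (P *v v)$j) = v$k1"
      using Qmat[OF k minor] by blast
    have lP: "l (P *v v) = v$k0" for v using P(2) by (simp add: la)
    have l'P: "l' (P *v v) = v$k1" for v using P(3) by (simp add: la')
    have hpP: "hom_poly d (\<lambda>v. p (P *v v))" by (rule hp_compose[OF hp])
    have hyp: "v$k1 = 0" if "v$k0 = 0" "p (P *v v) = 0" for v
    proof -
      have "P *v v \<in> {x. p x = 0 \<and> l x = 0}" using that lP by simp
      hence "P *v v \<in> {x. p x = 0 \<and> l' x = 0}" using Zeq by simp
      then show ?thesis using l'P by simp
    qed
    obtain C where C: "\<forall>v. v$k0 = 0 \<longrightarrow> p (P *v v) = C * (v$k1)^d"
      using fta_lemma[OF hpP d k hyp] by auto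
    show ?thesis using P(1) k lP C by blast
  qed
qed

theorem lemma3p6:
  fixes n d :: nat and t :: rat
  assumes "CARD('v::finite) = n + 2"
    and "2 \<le> d" and "d \<le> n + 1"
    and "0 < t" and "t < of_nat d / of_nat (n + 1)"
  shows "(\<forall>(p :: complex^'v \<Rightarrow> complex) l. is_pt d p l \<and> (Z1 p l \<or> Z2 p l)
            \<longrightarrow> \<not> git_t_semistable d t p l)
       \<and> {(p :: complex^'v \<Rightarrow> complex, l). is_pt d p l \<and> \<not> (Z1 p l \<or> Z2 p l) \<and> git_t_semistable d t p l}
         = {(p, l). is_pt d p l \<and> git_t_semistable d t p l}"
proof -
  have part1: "\<not> git_t_semistable d t p l" if pt: "is_pt d p l" and Z: "Z1 p l \<or> Z2 p l"
    for p l :: "complex^'v \<Rightarrow> complex"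
  proof
    assume "git_t_semistable d t p l"
    then obtain a b :: nat where b: "0 < b" and ss: "git_semistable_ab d a b p l"
      unfolding git_t_semistable_def by blast
    then obtain k F where k: "k > 0" and F: "F \<in> polyfun" and bh: "bihom d (k * a) (k * b) F"
      and inv: "sl_invariant d F" and nz: "F (p, l) \<noteq> 0"
      unfolding git_semistable_ab_def by blast
    have hp: "hom_poly d p" and hl: "hom_poly 1 l" and l0: "l \<noteq> (\<lambda>_. 0)" using pt by (auto simp: is_pt_def)
    have card2: "CARD('v) \<ge> 2" using assms(1) by simp
    have d1: "d \<ge> 1" using assms(2) by simp
    obtain P :: "complex^'v^'v" and k0 k1 C where P: "invertible P" and kk: "k0 \<noteq> k1"
      and lP: "\<forall>v. l (P *v v) = v$k0" and pP: "\<forall>v. v$k0 = 0 \<longrightarrow> p (P *v v) = C * (v$k1)^d"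
      using coords[OF card2 hp d1 hl l0 Z] by blast
    have n1: "n \<ge> 1" using assms(2,3) by simp
    have "F (p, l) = 0"
      by (rule oneps[OF assms(1) n1 assms(3) hp hl P kk _ _ F bh _ inv])
         (use lP pP b k in auto)
    then show False using nz by simp
  qed
  show ?thesis using part1 by blast
qed

end
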